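(* For any real numbers $a,b$ with $a\neq\pm b$ and any natural number $n\ge1$, \[ \Phi(a,b,2n)=\Phi(a,b,n)\,\Psi(a,b,n). \]
   Context: $\delta(m)=1$ for $m$ odd, $0$ for $m$ even. $\Psi(a,b,n)$, $\Phi(a,b,n)$ are defined by $\Psi(a,b,0)=2$, $\Psi(a,b,1)=1$, $\Psi(a,b,n+1)=(2a-b)^{\delta(n)}\Psi(a,b,n)-a\Psi(a,b,n-1)$ and $\Phi(a,b,0)=0$, $\Phi(a,b,1)=1$, $\Phi(a,b,n+1)=(2a-b)^{\delta(n+1)}\Phi(a,b,n)-a\Phi(a,b,n-1)$ for $n\ge1$. *)

theory Defs
  imports Complex_Main
begin

definition delta :: "nat \<Rightarrow> nat" where
  "delta m = (if odd m then 1 else 0)"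

fun Psi :: "real \<Rightarrow> real \<Rightarrow> nat \<Rightarrow> real" where
  "Psi a b 0 = 2"
| "Psi a b (Suc 0) = 1"
| "Psi a b (Suc (Suc n)) =
     (2*a - b) ^ delta (Suc n) * Psi a b (Suc n) - a * Psi a b n"

fun Phi :: "real \<Rightarrow> real \<Rightarrow> nat \<Rightarrow> real" where
  "Phi a b 0 = 0"
| "Phi a b (Suc 0) = 1"
| "Phi a b (Suc (Suc n)) =
     (2*a - b) ^ delta (Suc (Suc n)) * Phi a b (Suc n) - a * Phi a b n"

end

theory Submission
  imports Defs
begin

lemma pd: "(x::real) ^ delta n = (if odd n then x else 1)"
  by (simp add: delta_def)

lemma Phi_SS: "Phi a b (n+2) = (if odd n then 2*a-b else 1) * Phi a b (n+1) - a * Phi a b n"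
  by (simp add: delta_def)

lemma Phi2[simp]: "Phi a b (Suc (Suc 0)) = 1"
  by (simp add: delta_def)

lemma Phi3[simp]: "Phi a b (Suc (Suc (Suc 0))) = 2*a-b-a"
  by (simp add: delta_def)

declare Phi.simps(3)[simp del] pd[simp]

lemma Phi_add_aux:
  "\<forall>n. Phi a b (m+n+1) = (if odd m \<and> odd n then (2*a-b) else 1) * Phi a b (m+1) * Phi a b (n+1)
        - a * (if even m \<and> even n then (2*a-b) else 1) * Phi a b m * Phi a b n
     \<and> Phi a b (m+n+2) = (if even m \<and> odd n then (2*a-b) else 1) * Phi a b (m+2) * Phi a b (n+1)
        - a * (if odd m \<and> even n then (2*a-b) else 1) * Phi a b (m+1) * Phi a b n"
proof (induction m)
  case 0
  show ?case
  proof
    fix n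
    have "Phi a b (n+2) = (if odd n then 2*a-b else 1) * Phi a b (n+1) - a * Phi a b n" by (rule Phi_SS)
    then show "Phi a b (0+n+1) = (if odd (0::nat) \<and> odd n then (2*a-b) else 1) * Phi a b (0+1) * Phi a b (n+1)
        - a * (if even (0::nat) \<and> even n then (2*a-b) else 1) * Phi a b 0 * Phi a b n
     \<and> Phi a b (0+n+2) = (if even (0::nat) \<and> odd n then (2*a-b) else 1) * Phi a b (0+2) * Phi a b (n+1)
        - a * (if odd (0::nat) \<and> even n then (2*a-b) else 1) * Phi a b (0+1) * Phi a b n"
      by (simp add: numeral_2_eq_2 del: Phi.simps) (simp add: delta_def)
  qed
next
  case (Suc m)
  show ?case
  proof
    fix n
    have A: "Phi a b (m+n+1) = (if odd m \<and> odd n then (2*a-b) else 1) * Phi a b (m+1) * Phi a b (n+1)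
        - a * (if even m \<and> even n then (2*a-b) else 1) * Phi a b m * Phi a b n"
     and B: "Phi a b (m+n+2) = (if even m \<and> odd n then (2*a-b) else 1) * Phi a b (m+2) * Phi a b (n+1)
        - a * (if odd m \<and> even n then (2*a-b) else 1) * Phi a b (m+1) * Phi a b n"
      using Suc.IH by auto
    have C: "Phi a b (m+n+3) = (if odd (m+n+1) then 2*a-b else 1) * Phi a b (m+n+2) - a * Phi a b (m+n+1)"
      using Phi_SS[of a b "m+n+1"] by (simp add: numeral_3_eq_3 numeral_2_eq_2)
    have D: "Phi a b (m+3) = (if odd (m+1) then 2*a-b else 1) * Phi a b (m+2) - a * Phi a b (m+1)"
      using Phi_SS[of a b "m+1"] by (simp add: numeral_3_eq_3 numeral_2_eq_2)
    have E: "Phi a b (m+n+3) = (if odd m \<and> odd n then (2*a-b) else 1) * Phi a b (m+3) * Phi a b (n+1)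
        - a * (if even m \<and> even n then (2*a-b) else 1) * Phi a b (m+2) * Phi a b n"
    proof -
      have F: "Phi a b (m+2) = (if odd m then 2*a-b else 1) * Phi a b (m+1) - a * Phi a b m"
        by (rule Phi_SS)
      show ?thesis unfolding C D A B F
      by (cases "even m"; cases "even n"; simp add: algebra_simps del: Phi.simps)
    qed
    show "Phi a b (Suc m+n+1) = (if odd (Suc m) \<and> odd n then (2*a-b) else 1) * Phi a b (Suc m+1) * Phi a b (n+1)
        - a * (if even (Suc m) \<and> even n then (2*a-b) else 1) * Phi a b (Suc m) * Phi a b n
     \<and> Phi a b (Suc m+n+2) = (if even (Suc m) \<and> odd n then (2*a-b) else 1) * Phi a b (Suc m+2) * Phi a b (n+1)
        - a * (if odd (Suc m) \<and> even n then (2*a-b) else 1) * Phi a b (Suc m+1) * Phi a b n"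
    proof -
      have e: "Suc m + n + 1 = m+n+2" "Suc m + 1 = m+2" "Suc m+n+2 = m+n+3" "Suc m + 2 = m+3"
        by simp_all
      show ?thesis unfolding e using B E by (cases "even m"; cases "even n"; simp)
    qed
  qed
qed

lemma Psi_Phi: "n \<ge> 1 \<Longrightarrow> Psi a b n = Phi a b (n+1) - a * Phi a b (n-1)"
proof (induction a b n rule: Psi.induct)
  case (1 a b) then show ?case by simp
next
  case (2 a b) then show ?case by simp
next
  case (3 a b n)
  show ?case
  proof (cases n)
    case 0 then show ?thesis by (simp add: delta_def)
  next
    case (Suc k)
    have h1: "Psi a b (Suc n) = Phi a b (n+2) - a * Phi a b n" using 3 by simp
    have h2: "Psi a b n = Phi a b (n+1) - a * Phi a b k" using 3 Suc by simp
    have p3: "Phi a b (n+3) = (if odd (n+1) then 2*a-b else 1) * Phi a b (n+2) - a * Phi a b (n+1)"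
      using Phi_SS[of a b "n+1"] by (simp add: numeral_3_eq_3 numeral_2_eq_2)
    have p1: "Phi a b (k+2) = (if odd k then 2*a-b else 1) * Phi a b (k+1) - a * Phi a b k"
      by (rule Phi_SS)
    have kk: "k+2 = n+1" "k+1 = n" using Suc by simp_all
    have dk: "odd k = odd (n+1)" using Suc by simp
    have ps: "Psi a b (Suc (Suc n)) = (if odd (Suc n) then 2*a-b else 1) * Psi a b (Suc n) - a * Psi a b n"
      by (simp add: delta_def)
    have p1': "Phi a b (n+1) = (if odd (n+1) then 2*a-b else 1) * Phi a b n - a * Phi a b k"
      using p1 unfolding kk dk .
    have g: "Phi a b (Suc (Suc n) + 1) = Phi a b (n+3)" "Suc (Suc n) - 1 = n+1" by (simp_all add: numeral_3_eq_3)
    have p1a: "a * Phi a b (n+1) = a * ((if odd (n+1) then 2*a-b else 1) * Phi a b n - a * Phi a b k)"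
      using p1' by simp
    show ?thesis unfolding ps g h1 h2 p3
      using p1a by (cases "odd n"; simp add: algebra_simps)
  qed
qed

theorem theorem13p3:
  fixes a b :: real and n :: nat
  assumes "a \<noteq> b" and "a \<noteq> - b" and "n \<ge> 1"
  shows "Phi a b (2 * n) = Phi a b n * Psi a b n"
proof -
  obtain m where m: "n = m + 1" using assms(3) by (metis le_add_diff_inverse2)
  have "Phi a b (m+m+1+1) = (if even m \<and> odd m then (2*a-b) else 1) * Phi a b (m+2) * Phi a b (m+1)
        - a * (if odd m \<and> even m then (2*a-b) else 1) * Phi a b (m+1) * Phi a b m"
    using Phi_add_aux[of a b m] by (simp add: add.assoc)
  then have Q: "Phi a b (2*n) = Phi a b (m+2) * Phi a b (m+1) - a * Phi a b (m+1) * Phi a b m"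
    using m by (simp add: algebra_simps mult_2_right)
  moreover have P: "Psi a b n = Phi a b (m+2) - a * Phi a b m"
    using Psi_Phi[of n a b] m by simp
  have R: "Phi a b n = Phi a b (m+1)" using m by simp
  show ?thesis unfolding Q P R by (simp add: algebra_simps)
qed

end
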